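(* Let $\varphi(x)=\sum_{i\ge0}\gamma_ix^i\in\mathbb{K}[[x]]$ and let $k\ge0$ be an integer. Then $$\sum_{i=0}^m(-1)^i\binom{2m+2k-1}{m-i}\binom{m+i}{i}\gamma_{m+i-1}=0$$ for each $m\ge1$ if and only if there is a power series $\psi(y)\in\mathbb{K}[[y]]$ such that $$\sum_{i\ge0}\gamma_ix^i=\frac1x\cdot\frac{d^{2k-1}}{dx^{2k-1}}\left[\frac{x^{2k}}{1-x}\,\psi\!\left(\frac{x^2}{1-x}\right)\right],$$ where for $k=0$ the operator $\frac{d^{-1}}{dx^{-1}}$ means formal term-by-term integration with vanishing constant of integration. If $k\ge1$, this last condition is equivalent to the existence of $\rho(y)\in\mathbb{K}[[y]]$ with $$\sum_{i\ge0}\gamma_ix^i=\frac1x\cdot\frac{d^{2k-1}}{dx^{2k-1}}\left[x^{2k-2}\rho\!\left(\frac{x^2}{1-x}\right)\right].$$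
   Context: $\mathbb{K}\in\{\mathbb{Q},\mathbb{R},\mathbb{C}\}$. All operations (composition, differentiation, integration) are formal operations on formal power series. *)

theory Defs
  imports "HOL-Computational_Algebra.Formal_Power_Series"
begin

text \<open>Only j = 2k-1 >= -1 is used.\<close>
definition fps_diff_int :: "int \<Rightarrow> 'a::field_char_0 fps \<Rightarrow> 'a fps" where
  "fps_diff_int j f =
     (if 0 \<le> j then (fps_deriv ^^ nat j) f
      else ((\<lambda>g. fps_integral g 0) ^^ nat (- j)) f)"

end

theory Submission imports Defs begin

lemma deriv_pow_nth:
  "fps_nth ((fps_deriv ^^ r) f) n * fact n = fact (n + r) * fps_nth (f :: 'a::field_char_0 fps) (n + r)"
proof (induction r arbitrary: n)
  case 0 then show ?case by simp
next
  case (Suc r)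
  have "fps_nth ((fps_deriv ^^ Suc r) f) n * fact n = of_nat (n+1) * fact n * fps_nth ((fps_deriv ^^ r) f) (n+1)"
    by simp
  also have "\<dots> = fps_nth ((fps_deriv ^^ r) f) (n+1) * fact (n+1)" by (simp add: algebra_simps)
  also have "\<dots> = fact (n + 1 + r) * fps_nth f (n + 1 + r)" using Suc.IH[of "n+1"] .
  also have "\<dots> = fact (n + Suc r) * fps_nth f (n + Suc r)" by simp
  finally show ?case .
qed

lemma diff_int_nth:
  fixes F :: "'a::field_char_0 fps"
  shows "fps_nth (fps_diff_int (2 * int k - 1) F / fps_X) p * fact (p+1) = fact (p + 2*k) * fps_nth F (p + 2*k)"
proof (cases "k = 0")
  case True
  have "(1 + of_nat p :: 'a) \<noteq> 0"
    by (metis of_nat_Suc of_nat_eq_0_iff add.commute nat.simps(3))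
  with True show ?thesis by (simp add: fps_diff_int_def field_simps)
next
  case False
  then have "fps_diff_int (2 * int k - 1) F = (fps_deriv ^^ (2*k-1)) F"
    by (simp add: fps_diff_int_def nat_diff_distrib nat_mult_distrib)
  moreover have "p + 1 + (2*k-1) = p + 2*k" using False by simp
  ultimately show ?thesis using deriv_pow_nth[of "2*k-1" F "p+1"] by simp
qed

lemma ones_mult_nth:
  fixes F :: "'a::field fps"
  shows "fps_nth (inverse (1 - fps_X) * F) n = (\<Sum>l=0..n. fps_nth F l)"
  by (simp add: fps_inverse_one_minus_fps_X fps_mult_nth sum.atLeastAtMost_rev[of "\<lambda>l. fps_nth F l"])

lemma sum_choose_shift:
  "(\<Sum>l=0..M. (l - j) choose j) = (M + 1 - j) choose (j + 1)"
proof (induction M)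
  case 0 then show ?case by (cases j) auto
next
  case (Suc M)
  show ?case
  proof (cases "j \<le> M + 1")
    case True
    then have "Suc M + 1 - j = Suc (M + 1 - j)" by simp
    then show ?thesis using Suc True by (simp add: Suc_diff_le)
  next
    case False
    then show ?thesis using Suc by simp
  qed
qed

lemma T_nth:
  fixes n j :: nat
  shows "fps_nth (inverse (1 - fps_X) * (fps_X^2 * inverse (1 - fps_X))^j :: 'a::field_char_0 fps) n
         = of_nat ((n - j) choose j)"
proof (induction j arbitrary: n)
  case 0 then show ?case by (simp add: fps_inverse_one_minus_fps_X)
next
  case (Suc j)
  let ?A = "inverse (1 - fps_X) :: 'a fps"
  have eq: "?A * (fps_X^2 * ?A)^(Suc j) = fps_X^2 * (?A * (?A * (fps_X^2 * ?A)^j))"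
    by (simp only: power_Suc mult_ac)
  show ?case
  proof (cases "n < 2")
    case True then show ?thesis by (subst eq, subst fps_X_power_mult_nth) auto
  next
    case False
    have "fps_nth (?A * (fps_X^2 * ?A)^(Suc j)) n = (\<Sum>l=0..n-2. of_nat ((l - j) choose j))"
      using False by (subst eq, subst fps_X_power_mult_nth, simp, subst ones_mult_nth, simp add: Suc.IH)
    also have "\<dots> = of_nat (\<Sum>l=0..n-2. (l - j) choose j)" by simp
    also have "\<dots> = of_nat ((n - 2 + 1 - j) choose (j + 1))" by (simp only: sum_choose_shift)
    also have "n - 2 + 1 - j = n - Suc j" using False by simp
    finally show ?thesis by simp
  qed
qed

lemma compose_mult_nth:
  fixes a b c :: "'a::field fps"
  assumes b0: "fps_nth b 0 = 0"
  shows "fps_nth (c * (a oo b)) n = (\<Sum>i=0..n. fps_nth a i * fps_nth (c * b^i) n)"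
proof -
  have z: "fps_nth (b^i) l = 0" if "l < i" for i l
    using startsby_zero_power_prefix[OF b0] that by blast
  have "fps_nth (c * (a oo b)) n = fps_nth ((a oo b) * c) n" by (simp add: mult.commute)
  also have "\<dots> = (\<Sum>l=0..n. fps_nth (a oo b) l * fps_nth c (n - l))" by (simp add: fps_mult_nth)
  also have "\<dots> = (\<Sum>l=0..n. (\<Sum>i=0..n. fps_nth a i * fps_nth (b^i) l) * fps_nth c (n - l))"
  proof (rule sum.cong[OF refl])
    fix l assume l: "l \<in> {0..n}"
    have "fps_nth (a oo b) l = (\<Sum>i=0..l. fps_nth a i * fps_nth (b^i) l)" by (simp add: fps_compose_nth)
    also have "\<dots> = (\<Sum>i=0..n. fps_nth a i * fps_nth (b^i) l)"
      using l by (intro sum.mono_neutral_left) (auto simp: z)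
    finally show "fps_nth (a oo b) l * fps_nth c (n - l) = (\<Sum>i=0..n. fps_nth a i * fps_nth (b^i) l) * fps_nth c (n - l)" by simp
  qed
  also have "\<dots> = (\<Sum>i=0..n. fps_nth a i * (\<Sum>l=0..n. fps_nth (b^i) l * fps_nth c (n - l)))"
    unfolding sum_distrib_right sum_distrib_left mult.assoc by (rule sum.swap)
  also have "\<dots> = (\<Sum>i=0..n. fps_nth a i * fps_nth (b^i * c) n)"
    by (simp only: fps_mult_nth)
  also have "\<dots> = (\<Sum>i=0..n. fps_nth a i * fps_nth (c * b^i) n)"
    by (simp only: mult.commute[of "b^_" c])
  finally show ?thesis .
qed

definition hs :: "'a::field_char_0 fps \<Rightarrow> nat \<Rightarrow> 'a" where
  "hs psi p = (\<Sum>j=0..p. fps_nth psi j * of_nat ((p - j) choose j))"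

lemma E_nth:
  fixes psi :: "'a::field_char_0 fps"
  shows "fps_nth (fps_diff_int (2 * int k - 1)
              (fps_X ^ (2*k) / (1 - fps_X) * fps_compose psi (fps_X^2 / (1 - fps_X))) / fps_X) p
          * fact (p+1) = fact (p + 2*k) * hs psi p"
proof -
  let ?A = "inverse (1 - fps_X) :: 'a fps"
  have d1: "fps_X ^ (2*k) / (1 - fps_X) = fps_X ^ (2*k) * ?A" by (simp add: fps_divide_unit)
  have d2: "fps_X ^ 2 / (1 - fps_X) = fps_X ^ 2 * ?A" by (simp add: fps_divide_unit)
  have y0: "fps_nth (fps_X ^ 2 * ?A) 0 = 0" by simp
  have "fps_nth (fps_X ^ (2*k) / (1 - fps_X) * fps_compose psi (fps_X^2 / (1 - fps_X))) (p + 2*k)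
        = fps_nth (?A * fps_compose psi (fps_X^2 * ?A)) p"
    unfolding d1 d2 by (subst mult.assoc, subst fps_X_power_mult_nth) simp
  also have "\<dots> = hs psi p"
    unfolding compose_mult_nth[OF y0] hs_def T_nth by simp
  finally show ?thesis using diff_int_nth by metis
qed

lemma alt_diff:
  fixes q :: "nat \<Rightarrow> 'a::comm_ring_1"
  shows "(\<Sum>i\<le>Suc m. (-1)^i * of_nat (Suc m choose i) * q i)
       = - (\<Sum>i\<le>m. (-1)^i * of_nat (m choose i) * (q (Suc i) - q i))"
proof -
  have a: "(\<Sum>i\<le>Suc m. (-1)^i * of_nat (Suc m choose i) * q i)
      = q 0 + (\<Sum>i\<le>m. (-1)^(Suc i) * of_nat (m choose i) * q (Suc i))
            + (\<Sum>i\<le>m. (-1)^(Suc i) * of_nat (m choose Suc i) * q (Suc i))"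
    unfolding sum.atMost_Suc_shift by (simp add: sum.distrib[symmetric] algebra_simps del: sum.atMost_Suc)
  have b: "(\<Sum>i\<le>Suc m. (-1)^i * of_nat (m choose i) * q i)
      = q 0 + (\<Sum>i\<le>m. (-1)^(Suc i) * of_nat (m choose Suc i) * q (Suc i))"
    by (simp add: sum.atMost_Suc_shift del: sum.atMost_Suc)
  have c: "(\<Sum>i\<le>Suc m. (-1)^i * of_nat (m choose i) * q i)
      = (\<Sum>i\<le>m. (-1)^i * of_nat (m choose i) * q i)"
    by (simp add: binomial_eq_0)
  have d: "(\<Sum>i\<le>Suc m. (-1)^i * of_nat (Suc m choose i) * q i)
     = (\<Sum>i\<le>m. (-1)^(Suc i) * of_nat (m choose i) * q (Suc i)) + (\<Sum>i\<le>m. (-1)^i * of_nat (m choose i) * q i)"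
  proof -
    have f: "(\<Sum>i\<le>m. (-1)^i * of_nat (m choose i) * q i)
      = q 0 + (\<Sum>i\<le>m. (-1)^(Suc i) * of_nat (m choose Suc i) * q (Suc i))"
      by (subst c[symmetric], rule b)
    show ?thesis unfolding a f by (simp only: add_ac)
  qed
  have e: "- (\<Sum>i\<le>m. (-1)^i * of_nat (m choose i) * (q (Suc i) - q i))
     = (\<Sum>i\<le>m. (-1)^(Suc i) * of_nat (m choose i) * q (Suc i)) + (\<Sum>i\<le>m. (-1)^i * of_nat (m choose i) * q i)"
    by (simp add: sum_negf[symmetric] sum.distrib[symmetric] algebra_simps del: sum.atMost_Suc)
  show ?thesis using d e by simp
qed

lemma K1:
  "j < m \<Longrightarrow> (\<Sum>i\<le>m. (-1)^i * of_nat (m choose i) * of_nat ((i + a) choose j)) = (0::'a::comm_ring_1)"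
proof (induction m arbitrary: j a)
  case 0 then show ?case by simp
next
  case (Suc m)
  show ?case
  proof (cases j)
    case 0 then show ?thesis using choose_alternating_sum[of "Suc m"] by simp
  next
    case (Suc j')
    have "(\<Sum>i\<le>Suc m. (-1)^i * of_nat (Suc m choose i) * (of_nat ((i + a) choose j) :: 'a))
        = - (\<Sum>i\<le>m. (-1)^i * of_nat (m choose i) * of_nat ((i + a) choose j'))"
      unfolding alt_diff by (simp add: Suc)
    also have "\<dots> = 0" using Suc.IH[of j' a] Suc.prems Suc by simp
    finally show ?thesis .
  qed
qed

lemma K0:
  assumes "m \<ge> 1"
  shows "(\<Sum>i=0..m. (-1)^i * of_nat (m choose i) * of_nat ((m + i - 1 - j) choose j)) = (0::'a::comm_ring_1)"
proof (cases "j < m")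
  case True
  have "(\<Sum>i=0..m. (-1)^i * of_nat (m choose i) * of_nat ((m + i - 1 - j) choose j))
      = (\<Sum>i\<le>m. (-1)^i * of_nat (m choose i) * (of_nat ((i + (m - 1 - j)) choose j) :: 'a))"
    unfolding atLeast0AtMost by (rule sum.cong) (use True in \<open>auto simp: add.commute\<close>)
  also have "\<dots> = 0" by (rule K1[OF True])
  finally show ?thesis .
next
  case False
  show ?thesis using False assms by (intro sum.neutral ballI) (auto simp: binomial_eq_0)
qed

lemma hs_ext:
  assumes "p \<le> B"
  shows "hs psi p = (\<Sum>j=0..B. fps_nth psi j * of_nat ((p - j) choose j))"
  unfolding hs_def using assms
  by (intro sum.mono_neutral_left) (auto simp: binomial_eq_0)

lemma hs_alt:
  fixes psi :: "'a::field_char_0 fps"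
  assumes m: "m \<ge> 1"
  shows "(\<Sum>i=0..m. (-1)^i * of_nat (m choose i) * hs psi (m + i - 1)) = 0"
proof -
  have "(\<Sum>i=0..m. (-1)^i * of_nat (m choose i) * hs psi (m + i - 1))
     = (\<Sum>i=0..m. (-1)^i * of_nat (m choose i) *
          (\<Sum>j=0..2*m. fps_nth psi j * of_nat ((m + i - 1 - j) choose j)))"
    by (intro sum.cong refl, subst hs_ext[of _ "2*m"]) auto
  also have "\<dots> = (\<Sum>j=0..2*m. fps_nth psi j *
          (\<Sum>i=0..m. (-1)^i * of_nat (m choose i) * of_nat ((m + i - 1 - j) choose j)))"
    unfolding sum_distrib_left by (subst sum.swap) (simp add: mult_ac)
  also have "\<dots> = 0" by (intro sum.neutral ballI) (metis K0[OF m] mult_zero_right)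
  finally show ?thesis .
qed

lemma forward:
  fixes psi :: "'a::field_char_0 fps"
  assumes phi: "phi = fps_diff_int (2 * int k - 1)
              (fps_X ^ (2*k) / (1 - fps_X) * fps_compose psi (fps_X^2 / (1 - fps_X))) / fps_X"
    and m: "m \<ge> 1"
  shows "(\<Sum>i=0..m. (-1)^i * of_nat ((2*m+2*k-1) choose (m-i))
                   * of_nat ((m+i) choose i) * fps_nth phi (m+i-1)) = 0"
proof -
  define K :: 'a where "K = fact (2*m+2*k-1) / (fact m * fact m)"
  have trm: "(-1)^i * of_nat ((2*m+2*k-1) choose (m-i)) * of_nat ((m+i) choose i) * fps_nth phi (m+i-1)
     = K * ((-1)^i * of_nat (m choose i) * hs psi (m + i - 1))" if i: "i \<le> m" for i
  proof -
    have e: "fps_nth phi (m+i-1) * fact (m+i) = fact (m+i-1+2*k) * hs psi (m+i-1)"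
      using E_nth[of k psi "m+i-1"] m unfolding phi by simp
    have ph: "fps_nth phi (m+i-1) = fact (m+i-1+2*k) * hs psi (m+i-1) / fact (m+i)"
      using e by (simp add: field_simps)
    have bf1: "(of_nat ((2*m+2*k-1) choose (m-i)) :: 'a) = fact (2*m+2*k-1) / (fact (m-i) * fact (m+i-1+2*k))"
    proof -
      have le: "m - i \<le> 2*m+2*k-1" using m by linarith
      have "2*m+2*k-1 - (m-i) = m+i-1+2*k" using m i by simp
      then show ?thesis using binomial_fact[OF le] by simp
    qed
    have bf2: "(of_nat ((m+i) choose i) :: 'a) = fact (m+i) / (fact i * fact m)"
      using binomial_fact[of i "m+i"] by simp
    have bf3: "(of_nat (m choose i) :: 'a) = fact m / (fact i * fact (m-i))"
      using binomial_fact[of i m] i by simp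
    show ?thesis unfolding ph bf1 bf2 bf3 K_def by (simp add: field_simps)
  qed
  have "(\<Sum>i=0..m. (-1)^i * of_nat ((2*m+2*k-1) choose (m-i))
                   * of_nat ((m+i) choose i) * fps_nth phi (m+i-1))
      = (\<Sum>i=0..m. K * ((-1)^i * of_nat (m choose i) * hs psi (m + i - 1)))"
    by (intro sum.cong refl trm) auto
  also have "\<dots> = K * (\<Sum>i=0..m. (-1)^i * of_nat (m choose i) * hs psi (m + i - 1))"
    by (simp add: sum_distrib_left)
  also have "\<dots> = 0" by (simp only: hs_alt[OF m] mult_zero_right)
  finally show ?thesis .
qed

fun psiseq :: "'a::field_char_0 fps \<Rightarrow> nat \<Rightarrow> nat \<Rightarrow> 'a" where
  "psiseq phi k j = fps_nth phi (2*j) * fact (2*j+1) / fact (2*j+2*k)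
      - (\<Sum>l<j. psiseq phi k l * of_nat ((2*j - l) choose l))"

declare psiseq.simps[simp del]

lemma hs_psiseq:
  "hs (Abs_fps (psiseq phi k)) (2*j) = fps_nth phi (2*j) * fact (2*j+1) / fact (2*j+2*k)"
proof -
  let ?f = "\<lambda>l. psiseq phi k l * of_nat ((2*j - l) choose l)"
  have "hs (Abs_fps (psiseq phi k)) (2*j) = (\<Sum>l=0..2*j. ?f l)" by (simp add: hs_def)
  also have "\<dots> = (\<Sum>l<Suc j. ?f l)"
    by (rule sum.mono_neutral_right) (auto simp: binomial_eq_0)
  also have "\<dots> = psiseq phi k j + (\<Sum>l<j. ?f l)" by simp
  also have "\<dots> = fps_nth phi (2*j) * fact (2*j+1) / fact (2*j+2*k)"
    by (subst (1) psiseq.simps) simp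
  finally show ?thesis .
qed

lemma backward:
  fixes phi :: "'a::field_char_0 fps"
  assumes cond: "\<forall>m::nat. m \<ge> 1 \<longrightarrow>
             (\<Sum>i=0..m. (-1)^i * of_nat ((2*m+2*k-1) choose (m-i))
                          * of_nat ((m+i) choose i) * fps_nth phi (m+i-1)) = 0"
  shows "\<exists>psi :: 'a fps. phi = fps_diff_int (2 * int k - 1)
              (fps_X ^ (2*k) / (1 - fps_X) * fps_compose psi (fps_X^2 / (1 - fps_X))) / fps_X"
proof -
  define psi where "psi = Abs_fps (psiseq phi k)"
  define E where "E = fps_diff_int (2 * int k - 1)
              (fps_X ^ (2*k) / (1 - fps_X) * fps_compose psi (fps_X^2 / (1 - fps_X))) / fps_X"
  define c :: "nat \<Rightarrow> nat \<Rightarrow> 'a" where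
    "c m i = (-1)^i * of_nat ((2*m+2*k-1) choose (m-i)) * of_nat ((m+i) choose i)" for m i
  define d where "d n = fps_nth phi n - fps_nth E n" for n
  have condE: "(\<Sum>i=0..m. c m i * fps_nth E (m+i-1)) = 0" if "m \<ge> 1" for m
    using forward[OF E_def that] by (simp add: c_def)
  have condd: "(\<Sum>i=0..m. c m i * d (m+i-1)) = 0" if m: "m \<ge> 1" for m
  proof -
    have "(\<Sum>i=0..m. c m i * d (m+i-1)) =
       (\<Sum>i=0..m. c m i * fps_nth phi (m+i-1)) - (\<Sum>i=0..m. c m i * fps_nth E (m+i-1))"
      by (simp add: d_def right_diff_distrib sum_subtractf)
    then show ?thesis using condE[OF m] cond m by (simp add: c_def)
  qed
  have even: "d (2*j) = 0" for j
  proof -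
    have "fps_nth E (2*j) * fact (2*j+1) = fact (2*j + 2*k) * hs psi (2*j)"
      unfolding E_def by (rule E_nth)
    also have "\<dots> = fps_nth phi (2*j) * fact (2*j+1)"
      unfolding psi_def hs_psiseq by simp
    finally have "fps_nth E (2*j) = fps_nth phi (2*j)"
      by (metis mult_cancel_right fact_nonzero)
    then show ?thesis by (simp add: d_def)
  qed
  have all: "d p = 0" for p
  proof (induction p rule: less_induct)
    case (less p)
    show ?case
    proof (cases "even p")
      case True then show ?thesis using even by (metis evenE)
    next
      case False
      define m where "m = (p + 1) div 2"
      have m1: "m \<ge> 1" and pm: "p = 2*m - 1" using False by (auto simp: m_def elim!: oddE)
      have z: "c m i * d (m+i-1) = 0" if "i < m" for i
        using less.IH[of "m+i-1"] that pm m1 by simp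
      have "(\<Sum>i=0..m. c m i * d (m+i-1)) = (\<Sum>i<m. c m i * d (m+i-1)) + c m m * d (m+m-1)"
        by (simp add: atLeast0AtMost lessThan_Suc_atMost[symmetric])
      also have "(\<Sum>i<m. c m i * d (m+i-1)) = 0" using z by (intro sum.neutral ballI) blast
      finally have "c m m * d p = 0" using condd[OF m1] pm by (simp add: mult_2)
      moreover have "c m m \<noteq> 0" by (simp add: c_def)
      ultimately show ?thesis by simp
    qed
  qed
  have "phi = E" by (rule fps_ext) (use all in \<open>simp add: d_def\<close>)
  then show ?thesis unfolding E_def by blast
qed

lemma F_rel:
  fixes psi :: "'a::field_char_0 fps"
  assumes k: "k \<ge> 1"
  shows "fps_X ^ (2*k) / (1 - fps_X) * fps_compose psi (fps_X^2 / (1 - fps_X))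
       = fps_X ^ (2*k-2) * fps_compose (fps_X * psi) (fps_X^2 / (1 - fps_X))"
proof -
  let ?A = "inverse (1 - fps_X) :: 'a fps"
  have d1: "fps_X ^ (2*k) / (1 - fps_X) = fps_X ^ (2*k) * ?A" by (simp add: fps_divide_unit)
  have d2: "fps_X ^ 2 / (1 - fps_X) = fps_X ^ 2 * ?A" by (simp add: fps_divide_unit)
  have y0: "fps_nth (fps_X ^ 2 * ?A) 0 = 0" by simp
  have p: "(fps_X :: 'a fps) ^ (2*k) = fps_X ^ (2*k-2) * fps_X^2"
  proof -
    have e: "2*k = (2*k-2) + 2" using k by simp
    show ?thesis by (metis power_add e)
  qed
  show ?thesis unfolding d1 d2 fps_compose_mult_distrib[OF y0] fps_X_fps_compose_startby0[OF y0]
    by (subst p) (simp add: mult_ac)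
qed

lemma rho_equiv:
  fixes phi :: "'a::field_char_0 fps"
  assumes k: "k \<ge> 1"
  shows "(\<exists>psi :: 'a fps. phi = fps_diff_int (2 * int k - 1)
              (fps_X ^ (2*k) / (1 - fps_X) * fps_compose psi (fps_X^2 / (1 - fps_X))) / fps_X)
           \<longleftrightarrow>
           (\<exists>rho :: 'a fps. phi = fps_diff_int (2 * int k - 1)
              (fps_X ^ (2*k-2) * fps_compose rho (fps_X^2 / (1 - fps_X))) / fps_X)"
proof
  assume "\<exists>psi :: 'a fps. phi = fps_diff_int (2 * int k - 1)
              (fps_X ^ (2*k) / (1 - fps_X) * fps_compose psi (fps_X^2 / (1 - fps_X))) / fps_X"
  then obtain psi :: "'a fps" where "phi = fps_diff_int (2 * int k - 1)
              (fps_X ^ (2*k) / (1 - fps_X) * fps_compose psi (fps_X^2 / (1 - fps_X))) / fps_X" by blast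
  then show "\<exists>rho :: 'a fps. phi = fps_diff_int (2 * int k - 1)
              (fps_X ^ (2*k-2) * fps_compose rho (fps_X^2 / (1 - fps_X))) / fps_X"
    unfolding F_rel[OF k] by blast
next
  let ?A = "inverse (1 - fps_X) :: 'a fps"
  assume "\<exists>rho :: 'a fps. phi = fps_diff_int (2 * int k - 1)
              (fps_X ^ (2*k-2) * fps_compose rho (fps_X^2 / (1 - fps_X))) / fps_X"
  then obtain rho :: "'a fps" where phi: "phi = fps_diff_int (2 * int k - 1)
              (fps_X ^ (2*k-2) * fps_compose rho (fps_X^2 / (1 - fps_X))) / fps_X" by blast
  define psi where "psi = fps_shift 1 rho"
  have rd: "rho = fps_const (fps_nth rho 0) + fps_X * psi"
    by (rule fps_ext) (simp add: psi_def)
  have y0: "fps_nth (fps_X ^ 2 / (1 - fps_X) :: 'a fps) 0 = 0" by (simp add: fps_divide_unit)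
  have "fps_X ^ (2*k-2) * fps_compose rho (fps_X^2 / (1 - fps_X))
      = fps_X ^ (2*k-2) * fps_const (fps_nth rho 0)
        + fps_X ^ (2*k-2) * fps_compose (fps_X * psi) (fps_X^2 / (1 - fps_X))"
    by (subst rd) (simp add: fps_compose_add_distrib distrib_left)
  also have "\<dots> = fps_X ^ (2*k-2) * fps_const (fps_nth rho 0)
        + fps_X ^ (2*k) / (1 - fps_X) * fps_compose psi (fps_X^2 / (1 - fps_X))"
    unfolding F_rel[OF k] ..
  finally have Feq: "fps_X ^ (2*k-2) * fps_compose rho (fps_X^2 / (1 - fps_X)) = \<dots>" .
  have "phi = fps_diff_int (2 * int k - 1)
              (fps_X ^ (2*k) / (1 - fps_X) * fps_compose psi (fps_X^2 / (1 - fps_X))) / fps_X"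
  proof (rule fps_ext)
    fix p
    let ?G = "fps_X ^ (2*k) / (1 - fps_X) * fps_compose psi (fps_X^2 / (1 - fps_X)) :: 'a fps"
    have "fps_nth phi p * fact (p+1) = fact (p + 2*k) * fps_nth ?G (p + 2*k)"
      unfolding phi diff_int_nth Feq using k by (simp add: fps_X_power_mult_nth)
    also have "\<dots> = fps_nth (fps_diff_int (2 * int k - 1) ?G / fps_X) p * fact (p+1)"
      by (rule diff_int_nth[symmetric])
    finally show "fps_nth phi p = fps_nth (fps_diff_int (2 * int k - 1) ?G / fps_X) p"
      by (metis mult_cancel_right fact_nonzero)
  qed
  then show "\<exists>psi :: 'a fps. phi = fps_diff_int (2 * int k - 1)
              (fps_X ^ (2*k) / (1 - fps_X) * fps_compose psi (fps_X^2 / (1 - fps_X))) / fps_X" by blast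
qed

theorem lemma4p3:
  fixes phi :: "'a::field_char_0 fps" and k :: nat
  shows "((\<forall>m::nat. m \<ge> 1 \<longrightarrow>
             (\<Sum>i=0..m. (-1)^i * of_nat ((2*m+2*k-1) choose (m-i))
                          * of_nat ((m+i) choose i) * fps_nth phi (m+i-1)) = 0)
          \<longleftrightarrow>
          (\<exists>psi :: 'a fps. phi = fps_diff_int (2 * int k - 1)
              (fps_X ^ (2*k) / (1 - fps_X) * fps_compose psi (fps_X^2 / (1 - fps_X))) / fps_X))
       \<and> (k \<ge> 1 \<longrightarrow>
          ((\<exists>psi :: 'a fps. phi = fps_diff_int (2 * int k - 1)
              (fps_X ^ (2*k) / (1 - fps_X) * fps_compose psi (fps_X^2 / (1 - fps_X))) / fps_X)
           \<longleftrightarrow>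
           (\<exists>rho :: 'a fps. phi = fps_diff_int (2 * int k - 1)
              (fps_X ^ (2*k-2) * fps_compose rho (fps_X^2 / (1 - fps_X))) / fps_X)))"
  using backward[of k phi] forward[of phi k] rho_equiv[of k phi] by blast

end
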